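(* Let $n\in\mathbb{N}$, let $0\le\alpha_1\le\alpha_2\le\dots\le\alpha_n$ and $\beta_1\ge\beta_2\ge\dots\ge\beta_n\ge0$ be real numbers, and set $D_1=\bigoplus_{j=1}^n\mathrm{diag}(\alpha_j,\alpha_j)$ and $D_2=\bigoplus_{j=1}^n\mathrm{diag}(\beta_j,\beta_j)$ (both $2n\times 2n$). Then $$\min_{S\in\mathrm{Sp}(2n)}\operatorname{Tr}[D_1SD_2S^\intercal]=\operatorname{Tr}[D_1D_2],$$ where the minimum is over all real symplectic $2n\times 2n$ matrices.
   Context: $\mathrm{Sp}(2n)$ is the set of real $2n\times 2n$ matrices $S$ with $S\Omega S^\intercal=\Omega$, where $\Omega=\bigoplus_{i=1}^n\begin{pmatrix}0&1\\-1&0\end{pmatrix}$. *)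

theory Defs
  imports "Jordan_Normal_Form.Matrix"
begin

definition mtrace :: "real mat \<Rightarrow> real" where
  "mtrace A = (\<Sum>i<dim_row A. A $$ (i, i))"

(* Omega = direct sum of n copies of [[0,1],[-1,0]] (0-based indices: block j = {2j, 2j+1}). *)
definition Omega :: "nat \<Rightarrow> real mat" where
  "Omega n = mat (2*n) (2*n) (\<lambda>(i, j).
      if i div 2 = j div 2 \<and> even i \<and> odd j then 1
      else if i div 2 = j div 2 \<and> odd i \<and> even j then -1
      else 0)"

definition symplectic :: "nat \<Rightarrow> real mat \<Rightarrow> bool" where
  "symplectic n S \<longleftrightarrow> S \<in> carrier_mat (2*n) (2*n) \<and> S * Omega n * transpose_mat S = Omega n"

(* direct sum over j<n of diag(a j, a j), a 2n x 2n diagonal matrix (0-based j). *)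
definition pair_diag :: "nat \<Rightarrow> (nat \<Rightarrow> real) \<Rightarrow> real mat" where
  "pair_diag n a = mat (2*n) (2*n) (\<lambda>(i, j). if i = j then a (i div 2) else 0)"

end

theory Submission
  imports Defs "Jordan_Normal_Form.Determinant"
begin

lemma underdet:
  fixes g :: "nat \<Rightarrow> real vec"
  assumes q: "q < N" and g: "\<And>j. j < q \<Longrightarrow> g j \<in> carrier_vec N"
  shows "\<exists>v. v \<in> carrier_vec N \<and> v \<noteq> 0\<^sub>v N \<and> (\<forall>j<q. g j \<bullet> v = 0)"
proof -
  define c where "c = (\<lambda>i. if i < q then g i else 0\<^sub>v N)"
  define M where "M = mat\<^sub>r N N (\<lambda>i. if i = N - 1 then 0\<^sub>v N else c i)"
  have cc: "c \<in> {0 ..< N} \<rightarrow> carrier_vec N" using g by (auto simp: c_def)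
  have "det M = 0" unfolding M_def by (rule det_row_0[OF _ cc], use q in auto)
  moreover have M: "M \<in> carrier_mat N N" unfolding M_def by auto
  ultimately obtain v where v: "v \<in> carrier_vec N" "v \<noteq> 0\<^sub>v N" "M *\<^sub>v v = 0\<^sub>v N"
    using det_0_iff_vec_prod_zero_field[OF M] by auto
  have "g j \<bullet> v = 0" if j: "j < q" for j
  proof -
    have "(M *\<^sub>v v) $ j = 0" using v j q by simp
    moreover have "row M j = g j" using j q g[OF j] unfolding M_def c_def by auto
    ultimately show ?thesis using j q M by simp
  qed
  thus ?thesis using v by auto
qed

lemma self_prod_pos:
  fixes v :: "real vec"
  assumes v: "v \<in> carrier_vec N" "v \<noteq> 0\<^sub>v N"
  shows "v \<bullet> v > 0"
proof -
  obtain i where i: "i < N" "v $ i \<noteq> 0" using v by (metis eq_vecI carrier_vecD index_zero_vec)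
  have "v \<bullet> v = (\<Sum>k\<in>{0..<N}. (v $ k)^2)" using v by (simp add: scalar_prod_def power2_eq_square)
  also have "\<dots> > 0"
    by (rule sum_pos2[of _ i], use i in auto)
  finally show ?thesis .
qed

lemma ortho_exists:
  fixes g :: "nat \<Rightarrow> real vec"
  assumes "q + K \<le> N" "\<forall>j<q. g j \<in> carrier_vec N"
  shows "\<exists>xs. (\<forall>t<K. xs t \<in> carrier_vec N \<and> (\<forall>j<q. g j \<bullet> xs t = 0))
            \<and> (\<forall>t<K. \<forall>s<K. xs t \<bullet> xs s = (if t = s then 1 else 0))"
  using assms(1)
proof (induction K)
  case 0
  then show ?case by auto
next
  case (Suc K)
  then obtain xs where xs: "\<forall>t<K. xs t \<in> carrier_vec N \<and> (\<forall>j<q. g j \<bullet> xs t = 0)"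
    and on: "\<forall>t<K. \<forall>s<K. xs t \<bullet> xs s = (if t = s then 1 else 0)" by auto
  define h where "h = (\<lambda>j. if j < q then g j else xs (j - q))"
  have "\<exists>v. v \<in> carrier_vec N \<and> v \<noteq> 0\<^sub>v N \<and> (\<forall>j<q+K. h j \<bullet> v = 0)"
    by (rule underdet, use Suc.prems in simp, use xs assms(2) in \<open>auto simp: h_def\<close>)
  then obtain v where v: "v \<in> carrier_vec N" "v \<noteq> 0\<^sub>v N" "\<forall>j<q+K. h j \<bullet> v = 0" by auto
  have vv: "v \<bullet> v > 0" by (rule self_prod_pos[OF v(1,2)])
  define w where "w = (1 / sqrt (v \<bullet> v)) \<cdot>\<^sub>v v"
  have w: "w \<in> carrier_vec N" using v unfolding w_def by auto
  have ww: "w \<bullet> w = 1" using v vv unfolding w_def 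
    by (simp add: real_sqrt_mult[symmetric])
  have gw: "g j \<bullet> w = 0" if "j < q" for j
  proof -
    have "h j \<bullet> v = 0" using v(3) that by auto
    thus ?thesis using that assms(2) v(1) unfolding w_def h_def by auto
  qed
  have xw: "xs t \<bullet> w = 0" if "t < K" for t
  proof -
    have "h (q + t) \<bullet> v = 0" using v(3) that by auto
    thus ?thesis using that xs v(1) unfolding w_def h_def by auto
  qed
  have wx: "w \<bullet> xs t = 0" if "t < K" for t
    using xw[OF that] comm_scalar_prod[OF w, of "xs t"] xs that by auto
  show ?case
    by (rule exI[of _ "xs(K := w)"], use xs on w ww gw xw wx in auto)
qed

lemma bessel:
  fixes xs :: "nat \<Rightarrow> real vec"
  assumes xs: "\<forall>t<K. xs t \<in> carrier_vec N"
    and on: "\<forall>t<K. \<forall>s<K. xs t \<bullet> xs s = (if t = s then 1 else 0)"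
    and w: "w \<in> carrier_vec N"
  shows "(\<Sum>t<K. (w \<bullet> xs t)^2) \<le> w \<bullet> w"
proof -
  define c where "c t = w \<bullet> xs t" for t
  define p where "p i = (\<Sum>t<K. c t * xs t $ i)" for i
  have dot: "u \<bullet> v = (\<Sum>i<N. u $ i * v $ i)" if "v \<in> carrier_vec N" for u v :: "real vec"
    using that by (simp add: scalar_prod_def atLeast0LessThan)
  have c: "c t = (\<Sum>i<N. w $ i * xs t $ i)" if "t < K" for t
    using dot xs that unfolding c_def by auto
  have wp: "(\<Sum>i<N. w $ i * p i) = (\<Sum>t<K. c t * c t)"
  proof -
    have "(\<Sum>i<N. w $ i * p i) = (\<Sum>i<N. \<Sum>t<K. c t * (w $ i * xs t $ i))"
      unfolding p_def by (simp add: sum_distrib_left ac_simps)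
    also have "\<dots> = (\<Sum>t<K. c t * (\<Sum>i<N. w $ i * xs t $ i))"
      by (subst sum.swap) (simp add: sum_distrib_left)
    also have "\<dots> = (\<Sum>t<K. c t * c t)" using c by simp
    finally show ?thesis .
  qed
  have px: "(\<Sum>i<N. p i * xs s $ i) = c s" if s: "s < K" for s
  proof -
    have "(\<Sum>i<N. p i * xs s $ i) = (\<Sum>i<N. \<Sum>t<K. c t * (xs t $ i * xs s $ i))"
      unfolding p_def by (simp add: sum_distrib_right sum_distrib_left ac_simps)
    also have "\<dots> = (\<Sum>t<K. c t * (\<Sum>i<N. xs t $ i * xs s $ i))"
      by (subst sum.swap) (simp add: sum_distrib_left)
    also have "\<dots> = (\<Sum>t<K. c t * (if t = s then 1 else 0))"
      using on s xs dot by (intro sum.cong) auto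
    also have "\<dots> = c s" using s by (simp add: if_distrib cong: if_cong)
    finally show ?thesis .
  qed
  have pp: "(\<Sum>i<N. p i * p i) = (\<Sum>t<K. c t * c t)"
  proof -
    have "(\<Sum>i<N. p i * p i) = (\<Sum>i<N. \<Sum>t<K. c t * (p i * xs t $ i))"
      unfolding p_def[of i for i] by (simp add: sum_distrib_left ac_simps)
    also have "\<dots> = (\<Sum>t<K. c t * (\<Sum>i<N. p i * xs t $ i))"
      by (subst sum.swap) (simp add: sum_distrib_left)
    also have "\<dots> = (\<Sum>t<K. c t * c t)" using px by simp
    finally show ?thesis .
  qed
  have "0 \<le> (\<Sum>i<N. (w $ i - p i)^2)" by (simp add: sum_nonneg)
  also have "\<dots> = (\<Sum>i<N. w $ i * w $ i) - 2 * (\<Sum>i<N. w $ i * p i) + (\<Sum>i<N. p i * p i)"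
    by (simp add: power2_eq_square algebra_simps sum.distrib sum_subtractf sum_distrib_left)
  finally have "(\<Sum>t<K. c t * c t) \<le> (\<Sum>i<N. w $ i * w $ i)" using wp pp by simp
  thus ?thesis using dot[OF w] unfolding c_def by (simp add: power2_eq_square)
qed

definition Jv :: "nat \<Rightarrow> real vec \<Rightarrow> real vec" where
  "Jv n v = vec (2*n) (\<lambda>i. if even i then v $ (i+1) else - (v $ (i-1)))"

lemma Omega_carrier[simp]: "Omega n \<in> carrier_mat (2*n) (2*n)"
  unfolding Omega_def by auto

lemma Omega_mult:
  assumes v: "v \<in> carrier_vec (2*n)"
  shows "Omega n *\<^sub>v v = Jv n v"
proof (rule eq_vecI)
  show "dim_vec (Omega n *\<^sub>v v) = dim_vec (Jv n v)" by (simp add: Jv_def Omega_def)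
  fix i assume "i < dim_vec (Jv n v)"
  hence i: "i < 2*n" by (simp add: Jv_def)
  have "(Omega n *\<^sub>v v) $ i = (\<Sum>j\<in>{0..<2*n}. Omega n $$ (i,j) * v $ j)"
    using i v by (simp add: scalar_prod_def Omega_def)
  also have "\<dots> = (\<Sum>j\<in>{0..<2*n}. (if even i then (if j = i+1 then v $ (i+1) else 0)
                                     else (if j = i - 1 then - v $ (i-1) else 0)))"
  proof (rule sum.cong[OF refl])
    fix j assume j: "j \<in> {0..<2*n}"
    show "Omega n $$ (i,j) * v $ j = (if even i then (if j = i+1 then v $ (i+1) else 0)
                                     else (if j = i - 1 then - v $ (i-1) else 0))"
    proof (cases "even i")
      case True
      have "(i div 2 = j div 2 \<and> even i \<and> odd j) = (j = i + 1)" using True by presburger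
      moreover have "\<not> (i div 2 = j div 2 \<and> odd i \<and> even j)" using True by presburger
      ultimately show ?thesis using i j True unfolding Omega_def by auto
    next
      case False
      have "\<not>(i div 2 = j div 2 \<and> even i \<and> odd j)" using False by presburger
      moreover have "(i div 2 = j div 2 \<and> odd i \<and> even j) = (j = i - 1)" using False by presburger
      ultimately show ?thesis using i j False unfolding Omega_def by auto
    qed
  qed
  also have "\<dots> = Jv n v $ i"
  proof (cases "even i")
    case True
    then have "i + 1 < 2*n" using i by presburger
    then show ?thesis using i True by (simp add: Jv_def)
  next
    case False
    then have "i - 1 < 2*n" using i by presburger
    then show ?thesis using i False by (simp add: Jv_def)
  qed
  finally show "(Omega n *\<^sub>v v) $ i = Jv n v $ i" .
qed

lemma sum_pairs: fixes f :: "nat \<Rightarrow> 'a::comm_monoid_add" shows "(\<Sum>i<2*m. f i) = (\<Sum>p<m. f (2*p) + f (2*p+1))"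
  by (induction m) (auto simp: numeral_eq_Suc add.assoc)

lemma Jv_index_even: "p < n \<Longrightarrow> Jv n v $ (2*p) = v $ (2*p+1)"
  by (simp add: Jv_def)
lemma Jv_index_odd: "p < n \<Longrightarrow> Jv n v $ (2*p+1) = - v $ (2*p)"
  by (simp add: Jv_def)
lemma Jv_index_odd'[simp]: "p < n \<Longrightarrow> Jv n v $ Suc (2*p) = - v $ (2*p)"
  by (simp add: Jv_def)
lemma Jv_dim[simp]: "dim_vec (Jv n v) = 2*n" by (simp add: Jv_def)

lemma Jv_carrier[simp]: "Jv n v \<in> carrier_vec (2*n)" by (simp add: Jv_def)

lemma Jv_sq_sum:
  assumes "c \<le> n"
  shows "(\<Sum>i<2*c. (Jv n v $ i)^2) = (\<Sum>i<2*c. (v $ i)^2)"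
  unfolding sum_pairs using assms
  by (intro sum.cong) (auto simp: Jv_index_even Jv_index_odd)

lemma Jv_dot:
  assumes "x \<in> carrier_vec (2*n)" "y \<in> carrier_vec (2*n)"
  shows "Jv n x \<bullet> Jv n y = x \<bullet> y"
proof -
  have "Jv n x \<bullet> Jv n y = (\<Sum>i<2*n. Jv n x $ i * Jv n y $ i)"
    by (simp add: scalar_prod_def atLeast0LessThan)
  also have "\<dots> = (\<Sum>i<2*n. x $ i * y $ i)" unfolding sum_pairs
    by (intro sum.cong) (auto simp: Jv_index_even Jv_index_odd)
  also have "\<dots> = x \<bullet> y" using assms by (simp add: scalar_prod_def atLeast0LessThan)
  finally show ?thesis .
qed

lemma symp_identity:
  assumes S: "symplectic n S" and z: "z \<in> carrier_vec (2*n)" and x: "x \<in> carrier_vec (2*n)"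
  shows "(transpose_mat S *\<^sub>v z) \<bullet> (Omega n *\<^sub>v (transpose_mat S *\<^sub>v x)) = z \<bullet> (Omega n *\<^sub>v x)"
proof -
  have Sc: "S \<in> carrier_mat (2*n) (2*n)" and eq: "S * Omega n * transpose_mat S = Omega n"
    using S unfolding symplectic_def by auto
  have "(transpose_mat S *\<^sub>v z) \<bullet> (Omega n *\<^sub>v (transpose_mat S *\<^sub>v x))
      = z \<bullet> (S *\<^sub>v (Omega n *\<^sub>v (transpose_mat S *\<^sub>v x)))"
  proof -
    have "transpose_mat S *\<^sub>v x \<in> carrier_vec (2*n)" using Sc x by auto
    then have "Omega n *\<^sub>v (transpose_mat S *\<^sub>v x) \<in> carrier_vec (2*n)"
      by (rule mult_mat_vec_carrier[OF Omega_carrier])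
    then show ?thesis using transpose_vec_mult_scalar[OF Sc _ z] by blast
  qed
  also have "S *\<^sub>v (Omega n *\<^sub>v (transpose_mat S *\<^sub>v x)) = (S * Omega n * transpose_mat S) *\<^sub>v x"
  proof -
    have St: "transpose_mat S \<in> carrier_mat (2*n) (2*n)" using Sc by auto
    have SO: "S * Omega n \<in> carrier_mat (2*n) (2*n)" using Sc by auto
    have "(S * Omega n * transpose_mat S) *\<^sub>v x = (S * Omega n) *\<^sub>v (transpose_mat S *\<^sub>v x)"
      by (rule assoc_mult_mat_vec[OF SO St x])
    also have "\<dots> = S *\<^sub>v (Omega n *\<^sub>v (transpose_mat S *\<^sub>v x))"
      by (rule assoc_mult_mat_vec[OF Sc Omega_carrier], use St x in auto)
    finally show ?thesis by simp
  qed
  finally show ?thesis using eq by simp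
qed

lemma core:
  assumes S: "symplectic n S" and ab: "a \<le> b" "b < n"
  shows "real (2*(b+1-a)) \<le> (\<Sum>k<2*(b+1). \<Sum>l<2*n. (if 2*a \<le> l then (S $$ (l,k))^2 else 0))"
proof -
  define N where "N = 2*n"
  define c where "c = b + 1"
  define K where "K = 2*(b+1-a)"
  define q where "q = 2*a + (N - 2*c)"
  have Sc: "S \<in> carrier_mat N N" using S unfolding symplectic_def N_def by auto
  define g where "g j = (if j < 2*a then unit_vec N j else col S (2*c + (j - 2*a)))" for j
  have qK: "q + K \<le> N" using ab unfolding q_def K_def N_def c_def by auto
  have gc: "\<forall>j<q. g j \<in> carrier_vec N" using Sc unfolding g_def by auto
  obtain xs where xs: "\<forall>t<K. xs t \<in> carrier_vec N \<and> (\<forall>j<q. g j \<bullet> xs t = 0)"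
    and on: "\<forall>t<K. \<forall>s<K. xs t \<bullet> xs s = (if t = s then 1 else 0)"
    using ortho_exists[OF qK gc] by blast
  have xc: "xs t \<in> carrier_vec N" if "t < K" for t using xs that by auto
  have F1: "xs t $ i = 0" if "t < K" "i < 2*a" for t i
  proof -
    have "g i \<bullet> xs t = 0" using xs that unfolding q_def by auto
    moreover have "i < N" using that ab unfolding N_def by auto
    ultimately show ?thesis using that xc[OF that(1)] unfolding g_def by simp
  qed
  have F2: "(transpose_mat S *\<^sub>v xs t) $ k = 0" if "t < K" "2*c \<le> k" "k < N" for t k
  proof -
    have "g (2*a + (k - 2*c)) \<bullet> xs t = 0" using xs that unfolding q_def by auto
    moreover have "g (2*a + (k - 2*c)) = col S k" using that unfolding g_def by auto
    ultimately show ?thesis using that Sc by simp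
  qed
  define z where "z t = Jv n (xs t)" for t
  have zc: "z t \<in> carrier_vec N" for t unfolding z_def N_def by simp
  have zon: "\<forall>t<K. \<forall>s<K. z t \<bullet> z s = (if t = s then 1 else 0)"
    using on xc Jv_dot unfolding z_def N_def by auto
  have z0: "z t $ i = 0" if "t < K" "i < 2*a" for t i
  proof (cases "even i")
    case True
    then have "i + 1 < 2*a" using that by presburger
    then show ?thesis using F1[OF that(1)] that True ab unfolding z_def Jv_def by auto
  next
    case False
    then show ?thesis using F1[OF that(1)] that ab unfolding z_def Jv_def by auto
  qed
  define w where "w k = vec N (\<lambda>l. if 2*a \<le> l then S $$ (l,k) else 0)" for k
  have wc: "w k \<in> carrier_vec N" for k unfolding w_def by simp
  have STw: "(transpose_mat S *\<^sub>v y) $ k = w k \<bullet> y"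
    if y: "y \<in> carrier_vec N" "\<And>l. l < 2*a \<Longrightarrow> y $ l = 0" and k: "k < N" for y k
  proof -
    have "(transpose_mat S *\<^sub>v y) $ k = (\<Sum>l\<in>{0..<N}. S $$ (l,k) * y $ l)"
      using Sc y k by (simp add: scalar_prod_def col_def)
    also have "\<dots> = w k \<bullet> y" unfolding scalar_prod_def w_def using y
      by (intro sum.cong) auto
    finally show ?thesis .
  qed
  have key: "1 \<le> (\<Sum>i<2*c. (w i \<bullet> z t)^2) / 2 + (\<Sum>i<2*c. (w i \<bullet> xs t)^2) / 2"
    if t: "t < K" for t
  proof -
    define u where "u = transpose_mat S *\<^sub>v z t"
    define v where "v = transpose_mat S *\<^sub>v xs t"
    have uc: "u \<in> carrier_vec N" "v \<in> carrier_vec N" using Sc xc[OF t] zc unfolding u_def v_def by auto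
    have "1 = xs t \<bullet> xs t" using on t by auto
    also have "\<dots> = z t \<bullet> Jv n (xs t)" using Jv_dot xc[OF t] unfolding z_def N_def by auto
    also have "\<dots> = z t \<bullet> (Omega n *\<^sub>v xs t)" using Omega_mult xc[OF t] unfolding N_def by auto
    also have "\<dots> = u \<bullet> (Omega n *\<^sub>v v)" unfolding u_def v_def
      using symp_identity[OF S] zc xc[OF t] unfolding N_def by auto
    also have "\<dots> = u \<bullet> Jv n v" using Omega_mult uc unfolding N_def by auto
    also have "\<dots> = (\<Sum>i<N. u $ i * Jv n v $ i)" by (simp add: scalar_prod_def atLeast0LessThan N_def)
    also have "\<dots> = (\<Sum>i<2*c. u $ i * Jv n v $ i)"
    proof (rule sum.mono_neutral_right)
      show "finite {..<N}" by simp
      show "{..<2*c} \<subseteq> {..<N}" using ab unfolding N_def c_def by auto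
      show "\<forall>i\<in>{..<N} - {..<2 * c}. u $ i * Jv n v $ i = 0"
      proof
        fix i assume i: "i \<in> {..<N} - {..<2 * c}"
        show "u $ i * Jv n v $ i = 0"
        proof (cases "even i")
          case True
          have ii: "i < 2*n" "2*c \<le> i" using i unfolding N_def by auto
          then have "i + 1 < N" "2*c \<le> i+1" using True unfolding N_def by presburger+
          then show ?thesis using F2[OF t] True i unfolding v_def Jv_def N_def by auto
        next
          case False
          have ii: "i < 2*n" "2*c \<le> i" using i unfolding N_def by auto
          then have "2*c \<le> i - 1" "i - 1 < N" using False unfolding N_def by presburger+
          then show ?thesis using F2[OF t] False i unfolding v_def Jv_def N_def by auto
        qed
      qed
    qed
    also have "\<dots> \<le> (\<Sum>i<2*c. (u $ i)^2 / 2 + (Jv n v $ i)^2 / 2)"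
    proof (rule sum_mono)
      fix i
      have "0 \<le> (u $ i - Jv n v $ i)^2" by simp
      then show "u $ i * Jv n v $ i \<le> (u $ i)^2 / 2 + (Jv n v $ i)^2 / 2"
        by (simp add: power2_eq_square algebra_simps)
    qed
    also have "\<dots> = (\<Sum>i<2*c. (u $ i)^2) / 2 + (\<Sum>i<2*c. (v $ i)^2) / 2"
    proof -
      have cn: "c \<le> n" using ab unfolding c_def by simp
      have "(\<Sum>i<2*c. (u $ i)^2 / 2 + (Jv n v $ i)^2 / 2) = (\<Sum>i<2*c. (u $ i)^2) / 2 + (\<Sum>i<2*c. (Jv n v $ i)^2) / 2"
        by (simp add: sum.distrib sum_divide_distrib)
      then show ?thesis using Jv_sq_sum[OF cn, of v] by simp
    qed
    also have "(\<Sum>i<2*c. (u $ i)^2) = (\<Sum>i<2*c. (w i \<bullet> z t)^2)"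
      unfolding u_def using STw zc z0 t ab unfolding N_def c_def by (intro sum.cong) auto
    also have "(\<Sum>i<2*c. (v $ i)^2) = (\<Sum>i<2*c. (w i \<bullet> xs t)^2)"
      unfolding v_def using STw xc F1 t ab unfolding N_def c_def by (intro sum.cong) auto
    finally show ?thesis .
  qed
  have "real K = (\<Sum>t<K. 1)" by simp
  also have "\<dots> \<le> (\<Sum>t<K. (\<Sum>i<2*c. (w i \<bullet> z t)^2) / 2 + (\<Sum>i<2*c. (w i \<bullet> xs t)^2) / 2)"
    by (rule sum_mono) (use key in auto)
  also have "\<dots> = (\<Sum>i<2*c. (\<Sum>t<K. (w i \<bullet> z t)^2)) / 2 + (\<Sum>i<2*c. (\<Sum>t<K. (w i \<bullet> xs t)^2)) / 2"
    by (simp add: sum.distrib sum_divide_distrib[symmetric] sum.swap[of _ "{..<K}"])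
  also have "\<dots> \<le> (\<Sum>i<2*c. w i \<bullet> w i) / 2 + (\<Sum>i<2*c. w i \<bullet> w i) / 2"
  proof -
    have "(\<Sum>i<2*c. (\<Sum>t<K. (w i \<bullet> z t)^2)) \<le> (\<Sum>i<2*c. w i \<bullet> w i)"
      by (rule sum_mono, rule bessel) (use zc zon wc in auto)
    moreover have "(\<Sum>i<2*c. (\<Sum>t<K. (w i \<bullet> xs t)^2)) \<le> (\<Sum>i<2*c. w i \<bullet> w i)"
      by (rule sum_mono, rule bessel) (use xc on wc in auto)
    ultimately show ?thesis by simp
  qed
  also have "\<dots> = (\<Sum>i<2*c. w i \<bullet> w i)" by simp
  also have "\<dots> = (\<Sum>k<2*(b+1). \<Sum>l<2*n. (if 2*a \<le> l then (S $$ (l,k))^2 else 0))"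
    unfolding c_def w_def N_def
    by (intro sum.cong) (auto simp: scalar_prod_def atLeast0LessThan power2_eq_square intro!: sum.cong)
  finally show ?thesis unfolding K_def .
qed

lemma double_expand:
  fixes f g :: "nat \<Rightarrow> nat \<Rightarrow> real"
  shows "(\<Sum>i\<in>I. \<Sum>k\<in>K. (\<Sum>a\<in>A. f a i) * (\<Sum>b\<in>B. g b k) * G i k)
       = (\<Sum>a\<in>A. \<Sum>b\<in>B. \<Sum>i\<in>I. \<Sum>k\<in>K. f a i * g b k * G i k)"
proof -
  have pw: "(\<Sum>a\<in>A. f a i) * (\<Sum>b\<in>B. g b k) * G i k = (\<Sum>a\<in>A. \<Sum>b\<in>B. f a i * g b k * G i k)" for i k
    by (subst sum.swap) (simp add: sum_distrib_left sum_distrib_right)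
  have "(\<Sum>i\<in>I. \<Sum>k\<in>K. (\<Sum>a\<in>A. f a i) * (\<Sum>b\<in>B. g b k) * G i k)
      = (\<Sum>i\<in>I. \<Sum>k\<in>K. \<Sum>a\<in>A. \<Sum>b\<in>B. f a i * g b k * G i k)"
    by (simp only: pw)
  also have "\<dots> = (\<Sum>i\<in>I. \<Sum>a\<in>A. \<Sum>k\<in>K. \<Sum>b\<in>B. f a i * g b k * G i k)"
    by (rule sum.cong[OF refl], rule sum.swap)
  also have "\<dots> = (\<Sum>a\<in>A. \<Sum>i\<in>I. \<Sum>k\<in>K. \<Sum>b\<in>B. f a i * g b k * G i k)"
    by (rule sum.swap)
  also have "\<dots> = (\<Sum>a\<in>A. \<Sum>i\<in>I. \<Sum>b\<in>B. \<Sum>k\<in>K. f a i * g b k * G i k)"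
    by (intro sum.cong refl sum.swap)
  also have "\<dots> = (\<Sum>a\<in>A. \<Sum>b\<in>B. \<Sum>i\<in>I. \<Sum>k\<in>K. f a i * g b k * G i k)"
    by (intro sum.cong refl sum.swap)
  finally show ?thesis .
qed

lemma single_expand:
  fixes f g :: "nat \<Rightarrow> nat \<Rightarrow> real"
  shows "(\<Sum>i\<in>I. (\<Sum>a\<in>A. f a i) * (\<Sum>b\<in>B. g b i))
       = (\<Sum>a\<in>A. \<Sum>b\<in>B. \<Sum>i\<in>I. f a i * g b i)"
proof -
  have pw: "(\<Sum>a\<in>A. f a i) * (\<Sum>b\<in>B. g b i) = (\<Sum>a\<in>A. \<Sum>b\<in>B. f a i * g b i)" for i
    by (subst sum.swap) (simp add: sum_distrib_left sum_distrib_right)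
  have "(\<Sum>i\<in>I. (\<Sum>a\<in>A. f a i) * (\<Sum>b\<in>B. g b i)) = (\<Sum>i\<in>I. \<Sum>a\<in>A. \<Sum>b\<in>B. f a i * g b i)"
    by (simp only: pw)
  also have "\<dots> = (\<Sum>a\<in>A. \<Sum>i\<in>I. \<Sum>b\<in>B. f a i * g b i)" by (rule sum.swap)
  also have "\<dots> = (\<Sum>a\<in>A. \<Sum>b\<in>B. \<Sum>i\<in>I. f a i * g b i)" by (intro sum.cong refl sum.swap)
  finally show ?thesis .
qed

lemma sum_if_left:
  fixes h :: "nat \<Rightarrow> real"
  assumes "i \<in> A" "finite A"
  shows "(\<Sum>l\<in>A. (if i = l then x else 0) * h l) = x * h i"
proof -
  have e: "(\<lambda>l. (if i = l then x else 0) * h l) = (\<lambda>l. if i = l then x * h i else 0)" by auto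
  show ?thesis unfolding e using assms by (simp add: sum.delta)
qed

lemma sum_if_right:
  fixes h :: "nat \<Rightarrow> real"
  assumes "k \<in> A" "finite A"
  shows "(\<Sum>l\<in>A. h l * (if l = k then x l else 0)) = h k * x k"
proof -
  have e: "(\<lambda>l. h l * (if l = k then x l else 0)) = (\<lambda>l. if l = k then h k * x k else 0)" by auto
  show ?thesis unfolding e using assms by (simp add: sum.delta')
qed

lemma pd_left:
  assumes M: "M \<in> carrier_mat (2*n) m"
  shows "pair_diag n a * M = mat (2*n) m (\<lambda>(i,k). a (i div 2) * M $$ (i,k))"
proof (rule eq_matI)
  fix i k assume i: "i < dim_row (mat (2*n) m (\<lambda>(i,k). a (i div 2) * M $$ (i,k)))"
    and k: "k < dim_col (mat (2*n) m (\<lambda>(i,k). a (i div 2) * M $$ (i,k)))"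
  have "(pair_diag n a * M) $$ (i,k) = a (i div 2) * M $$ (i,k)"
    using i k M by (auto simp: pair_diag_def scalar_prod_def col_def sum_if_left)
  then show "(pair_diag n a * M) $$ (i,k) = mat (2*n) m (\<lambda>(i,k). a (i div 2) * M $$ (i,k)) $$ (i,k)"
    using i k by simp
qed (use M in \<open>auto simp: pair_diag_def\<close>)

lemma pd_right:
  assumes M: "M \<in> carrier_mat m (2*n)"
  shows "M * pair_diag n a = mat m (2*n) (\<lambda>(i,k). M $$ (i,k) * a (k div 2))"
proof (rule eq_matI)
  fix i k assume i: "i < dim_row (mat m (2*n) (\<lambda>(i,k). M $$ (i,k) * a (k div 2)))"
    and k: "k < dim_col (mat m (2*n) (\<lambda>(i,k). M $$ (i,k) * a (k div 2)))"
  have "(M * pair_diag n a) $$ (i,k) = M $$ (i,k) * a (k div 2)"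
    using i k M by (auto simp: pair_diag_def scalar_prod_def col_def row_def sum_if_right)
  then show "(M * pair_diag n a) $$ (i,k) = mat m (2*n) (\<lambda>(i,k). M $$ (i,k) * a (k div 2)) $$ (i,k)"
    using i k by simp
qed (use M in \<open>auto simp: pair_diag_def\<close>)

lemma pd_carrier[simp]: "pair_diag n a \<in> carrier_mat (2*n) (2*n)"
  by (simp add: pair_diag_def)

lemma trace_formula:
  assumes S: "S \<in> carrier_mat (2*n) (2*n)"
  shows "mtrace (pair_diag n \<alpha> * S * pair_diag n \<beta> * transpose_mat S)
       = (\<Sum>i<2*n. \<Sum>k<2*n. \<alpha> (i div 2) * \<beta> (k div 2) * (S $$ (i,k))^2)"
proof -
  define X where "X = mat (2*n) (2*n) (\<lambda>(i,k). \<alpha> (i div 2) * S $$ (i,k) * \<beta> (k div 2))"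
  have "pair_diag n \<alpha> * S * pair_diag n \<beta> = X"
  proof -
    have "pair_diag n \<alpha> * S = mat (2*n) (2*n) (\<lambda>(i,k). \<alpha> (i div 2) * S $$ (i,k))"
      by (rule pd_left[OF S])
    moreover have "mat (2*n) (2*n) (\<lambda>(i,k). \<alpha> (i div 2) * S $$ (i,k)) * pair_diag n \<beta> = X"
      unfolding X_def by (subst pd_right) auto
    ultimately show ?thesis by simp
  qed
  moreover have "mtrace (X * transpose_mat S) = (\<Sum>i<2*n. \<Sum>k<2*n. \<alpha> (i div 2) * \<beta> (k div 2) * (S $$ (i,k))^2)"
    unfolding mtrace_def using S
    by (auto simp: X_def scalar_prod_def row_def col_def atLeast0LessThan power2_eq_square ac_simps intro!: sum.cong)
  ultimately show ?thesis by simp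
qed

lemma trace_diag:
  "mtrace (pair_diag n \<alpha> * pair_diag n \<beta>) = (\<Sum>i<2*n. \<alpha> (i div 2) * \<beta> (i div 2))"
  unfolding mtrace_def by (subst pd_left[OF pd_carrier]) (auto simp: pair_diag_def intro!: sum.cong)

lemma abel_alpha:
  fixes \<alpha> :: "nat \<Rightarrow> real"
  defines "\<delta> \<equiv> (\<lambda>a. \<alpha> a - (if a = 0 then 0 else \<alpha> (a - 1)))"
  assumes j: "j < n"
  shows "\<alpha> j = (\<Sum>a<n. if a \<le> j then \<delta> a else 0)"
proof -
  have tel: "(\<Sum>a\<le>m. \<delta> a) = \<alpha> m" for m
    by (induction m) (auto simp: \<delta>_def)
  have "(\<Sum>a<n. if a \<le> j then \<delta> a else 0) = (\<Sum>a\<in>{a\<in>{..<n}. a \<le> j}. \<delta> a)"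
    by (rule sum.inter_filter[symmetric]) simp
  also have "{a\<in>{..<n}. a \<le> j} = {..j}" using j by auto
  finally show ?thesis using tel by simp
qed

lemma abel_beta:
  fixes \<beta> :: "nat \<Rightarrow> real" and n :: nat
  defines "\<epsilon> \<equiv> (\<lambda>b. \<beta> b - (if b + 1 < n then \<beta> (b+1) else 0))"
  assumes j: "j < n"
  shows "\<beta> j = (\<Sum>b<n. if j \<le> b then \<epsilon> b else 0)"
proof -
  have tel: "(\<Sum>b\<in>{m..<n}. \<epsilon> b) = \<beta> m" if "m \<le> n - 1" for m
    using that
  proof (induction m rule: inc_induct)
    case base
    have "{n - 1..<n} = {n-1}" using j by auto
    then show ?case using j by (simp add: \<epsilon>_def)
  next
    case (step m)
    have "{m..<n} = insert m {Suc m..<n}" using step by auto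
    then show ?case using step by (simp add: \<epsilon>_def)
  qed
  have "(\<Sum>b<n. if j \<le> b then \<epsilon> b else 0) = (\<Sum>b\<in>{b\<in>{..<n}. j \<le> b}. \<epsilon> b)"
    by (rule sum.inter_filter[symmetric]) simp
  also have "{b\<in>{..<n}. j \<le> b} = {j..<n}" by auto
  finally show ?thesis using tel[of j] j by simp
qed

theorem mainTheorem2:
  fixes n :: nat and \<alpha> \<beta> :: "nat \<Rightarrow> real"
  assumes alpha_nonneg: "\<And>j. j < n \<Longrightarrow> 0 \<le> \<alpha> j"
    and alpha_mono: "\<And>i j. i \<le> j \<Longrightarrow> j < n \<Longrightarrow> \<alpha> i \<le> \<alpha> j"
    and beta_nonneg: "\<And>j. j < n \<Longrightarrow> 0 \<le> \<beta> j"
    and beta_anti: "\<And>i j. i \<le> j \<Longrightarrow> j < n \<Longrightarrow> \<beta> j \<le> \<beta> i"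
  shows "(\<forall>S. symplectic n S \<longrightarrow>
            mtrace (pair_diag n \<alpha> * pair_diag n \<beta>)
              \<le> mtrace (pair_diag n \<alpha> * S * pair_diag n \<beta> * transpose_mat S))
       \<and> (\<exists>S. symplectic n S \<and>
            mtrace (pair_diag n \<alpha> * S * pair_diag n \<beta> * transpose_mat S)
              = mtrace (pair_diag n \<alpha> * pair_diag n \<beta>))"
proof
  show "\<forall>S. symplectic n S \<longrightarrow>
            mtrace (pair_diag n \<alpha> * pair_diag n \<beta>)
              \<le> mtrace (pair_diag n \<alpha> * S * pair_diag n \<beta> * transpose_mat S)"
  proof (intro allI impI)
    fix S assume S: "symplectic n S"
    have Sc: "S \<in> carrier_mat (2*n) (2*n)" using S unfolding symplectic_def by auto
    define \<delta> where "\<delta> = (\<lambda>a. \<alpha> a - (if a = 0 then 0 else \<alpha> (a - 1)))"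
    define \<epsilon> where "\<epsilon> = (\<lambda>b. \<beta> b - (if b + 1 < n then \<beta> (b+1) else 0))"
    define f where "f a i = (if a \<le> i div 2 then \<delta> a else 0)" for a i :: nat
    define g where "g b k = (if k div 2 \<le> b then \<epsilon> b else 0)" for b k :: nat
    have dpos: "0 \<le> \<delta> a" if "a < n" for a
      using that alpha_nonneg[of 0] alpha_mono[of "a-1" a] unfolding \<delta>_def by auto
    have epos: "0 \<le> \<epsilon> b" if "b < n" for b
      using that beta_nonneg[of b] beta_anti[of b "b+1"] unfolding \<epsilon>_def by auto
    have al: "\<alpha> (i div 2) = (\<Sum>a<n. f a i)" if "i < 2*n" for i
      unfolding f_def \<delta>_def by (rule abel_alpha) (use that in auto)
    have be: "\<beta> (k div 2) = (\<Sum>b<n. g b k)" if "k < 2*n" for k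
      unfolding g_def \<epsilon>_def by (rule abel_beta) (use that in auto)
    define Q where "Q a b = (\<Sum>i<2*n. \<Sum>k<2*n. (if a \<le> i div 2 \<and> k div 2 \<le> b then (S $$ (i,k))^2 else 0))" for a b
    define T where "T a b = (\<Sum>i<2*n. (if a \<le> i div 2 \<and> i div 2 \<le> b then 1 else 0::real))" for a b
    have lhs: "mtrace (pair_diag n \<alpha> * S * pair_diag n \<beta> * transpose_mat S) = (\<Sum>a<n. \<Sum>b<n. \<delta> a * \<epsilon> b * Q a b)"
    proof -
      have "mtrace (pair_diag n \<alpha> * S * pair_diag n \<beta> * transpose_mat S)
          = (\<Sum>i<2*n. \<Sum>k<2*n. (\<Sum>a<n. f a i) * (\<Sum>b<n. g b k) * (S $$ (i,k))^2)"
        unfolding trace_formula[OF Sc] using al be by (intro sum.cong) auto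
      also have "\<dots> = (\<Sum>a<n. \<Sum>b<n. \<Sum>i<2*n. \<Sum>k<2*n. f a i * g b k * (S $$ (i,k))^2)"
        by (rule double_expand)
      also have "\<dots> = (\<Sum>a<n. \<Sum>b<n. \<delta> a * \<epsilon> b * Q a b)"
        unfolding Q_def sum_distrib_left by (intro sum.cong refl) (auto simp: f_def g_def)
      finally show ?thesis .
    qed
    have rhs: "mtrace (pair_diag n \<alpha> * pair_diag n \<beta>) = (\<Sum>a<n. \<Sum>b<n. \<delta> a * \<epsilon> b * T a b)"
    proof -
      have "mtrace (pair_diag n \<alpha> * pair_diag n \<beta>) = (\<Sum>i<2*n. (\<Sum>a<n. f a i) * (\<Sum>b<n. g b i))"
        unfolding trace_diag using al be by (intro sum.cong) auto
      also have "\<dots> = (\<Sum>a<n. \<Sum>b<n. \<Sum>i<2*n. f a i * g b i)"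
        by (rule single_expand)
      also have "\<dots> = (\<Sum>a<n. \<Sum>b<n. \<delta> a * \<epsilon> b * T a b)"
        unfolding T_def sum_distrib_left by (intro sum.cong refl) (auto simp: f_def g_def)
      finally show ?thesis .
    qed
    have TQ: "T a b \<le> Q a b" if "a < n" "b < n" for a b
    proof (cases "a \<le> b")
      case False
      then have "T a b = 0" unfolding T_def by (intro sum.neutral) auto
      moreover have "0 \<le> Q a b" unfolding Q_def by (intro sum_nonneg) auto
      ultimately show ?thesis by simp
    next
      case True
      have "T a b = real (card {i\<in>{..<2*n}. a \<le> i div 2 \<and> i div 2 \<le> b})"
        unfolding T_def by (simp add: sum.inter_filter[symmetric])
      also have "{i\<in>{..<2*n}. a \<le> i div 2 \<and> i div 2 \<le> b} = {2*a..<2*(b+1)}"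
        using that by auto
      also have "real (card {2*a..<2*(b+1)}) = real (2*(b+1-a))" by simp
      also have "\<dots> \<le> (\<Sum>k<2*(b+1). \<Sum>l<2*n. (if 2*a \<le> l then (S $$ (l,k))^2 else 0))"
        by (rule core[OF S True that(2)])
      also have "\<dots> = (\<Sum>k<2*n. \<Sum>l<2*n. (if k < 2*(b+1) then (if 2*a \<le> l then (S $$ (l,k))^2 else 0) else 0))"
        using that by (intro sum.mono_neutral_cong_left) auto
      also have "\<dots> = Q a b" unfolding Q_def
        by (subst sum.swap) (intro sum.cong refl, auto)
      finally show ?thesis .
    qed
    show "mtrace (pair_diag n \<alpha> * pair_diag n \<beta>)
              \<le> mtrace (pair_diag n \<alpha> * S * pair_diag n \<beta> * transpose_mat S)"
      unfolding lhs rhs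
      by (intro sum_mono mult_left_mono TQ mult_nonneg_nonneg dpos epos) auto
  qed
next
  have "symplectic n (1\<^sub>m (2*n))" unfolding symplectic_def
    using left_mult_one_mat[OF Omega_carrier[of n]] right_mult_one_mat[OF Omega_carrier[of n]] by simp
  moreover have "pair_diag n \<alpha> * 1\<^sub>m (2*n) * pair_diag n \<beta> * transpose_mat (1\<^sub>m (2*n))
      = pair_diag n \<alpha> * pair_diag n \<beta>"
    using right_mult_one_mat[OF pd_carrier[of n \<alpha>]] right_mult_one_mat[OF mult_carrier_mat[OF pd_carrier[of n \<alpha>] pd_carrier[of n \<beta>]]]
    by simp
  ultimately show "\<exists>S. symplectic n S \<and>
            mtrace (pair_diag n \<alpha> * S * pair_diag n \<beta> * transpose_mat S)
              = mtrace (pair_diag n \<alpha> * pair_diag n \<beta>)" by metis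
qed

end
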